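(* Fix a token $\texttt{<x>}\in\mathsf{Voc}$, an integer $\ell\ge0$, a length $T\ge1$, and $\varepsilon\in(0,1)$. There exist matrices $\mathbf{K},\mathbf{Q}\in\mathbb{R}^{(2d_\mathsf{PE})\times d}$ such that for every sequence $(\mathbf{h}_1,\dots,\mathbf{h}_T)$ satisfying (i) $\mathbf{h}_i=\sum_{v\in\mathsf{Voc}}\lambda_{i,v}\mathbf{u}_v$ with $\lambda_{i,v}\ge0$ and $\sum_{v}\lambda_{i,v}^2=1$ for all $i\in[T]$, (ii) $\langle\mathbf{u}_{\texttt{<x>}},\mathbf{h}_i\rangle\in\{0,1\}$ for all $i$, and (iii) $\langle\mathbf{u}_{\texttt{<x>}},\mathbf{h}_i\rangle=0$ for all $i\le\ell$, it holds for every $i\in[T]$: if $\langle\mathbf{h}_i,\mathbf{u}_{\texttt{<x>}}\rangle=1$ then $s_{i,i-\ell}>1-\varepsilon$, and otherwise $s_{i,1}>1-\varepsilon$. Here $s_{i,\cdot}=\mathsf{SoftMax}(\langle\mathbf{q}_i,\mathbf{k}_1\rangle,\dots,\langle\mathbf{q}_i,\mathbf{k}_i\rangle)$ with $\mathbf{q}_j=\mathbf{Q}(\mathbf{h}_j+\mathbf{p}_j)$, $\mathbf{k}_j=\mathbf{K}(\mathbf{h}_j+\mathbf{p}_j)$.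
   Context: Vocabulary $\mathsf{Voc}=\{1,\dots,V\}$. Embedding dimension $d=3d_\mathsf{TE}+d_\mathsf{PE}$ with $d_\mathsf{PE}$ even. Each token $v$ has embedding $\mathbf{u}_v\in\mathbb{R}^d$ whose coordinates beyond the first $d_\mathsf{TE}$ are zero, and the vectors formed by the first $d_\mathsf{TE}$ coordinates of the $\mathbf{u}_v$ are orthonormal over $v\in\mathsf{Voc}$. Sinusoidal positional encoding: $\mathbf{p}_i\in\mathbb{R}^d$ is zero on its first $3d_\mathsf{TE}$ coordinates and its last $d_\mathsf{PE}$ coordinates $\bar{\mathbf{p}}_i$ are $\bar p_{i,2j-1}=\cos(iM^{-2j/d_\mathsf{PE}})$, $\bar p_{i,2j}=\sin(iM^{-2j/d_\mathsf{PE}})$, $j=1,\dots,d_\mathsf{PE}/2$, where $M>0$ is a fixed large integer. $\mathsf{SoftMax}(\boldsymbol{x})_j=e^{x_j}/\sum_k e^{x_k}$. *)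

theory Defs
  imports Complex_Main "Jordan_Normal_Form.Matrix"
begin

text \<open>Coordinates are 0-based: paper coordinate c+1 is Isabelle coordinate c.
  Embedding dimension d = 3*dTE + dPE.\<close>

definition pos_enc :: "nat \<Rightarrow> nat \<Rightarrow> nat \<Rightarrow> nat \<Rightarrow> real vec" where
  "pos_enc dTE dPE M i = vec (3*dTE+dPE) (\<lambda>c.
     if c < 3*dTE then 0
     else (let r = c - 3*dTE; j = r div 2 + 1;
               w = real M powr (-(2 * real j) / real dPE) in
           if even r then cos (real i * w) else sin (real i * w)))"

definition SoftMax :: "(nat \<Rightarrow> real) \<Rightarrow> nat \<Rightarrow> nat \<Rightarrow> real" where
  "SoftMax x n j = exp (x j) / (\<Sum>k=1..n. exp (x k))"

end

theory Submission
  imports Defs "HOL-Computational_Algebra.Polynomial"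
begin


lemma higher_pderiv_zero:
  fixes p :: "real poly"
  shows "degree p < k \<Longrightarrow> (pderiv ^^ k) p = 0"
proof (induction k arbitrary: p)
  case 0 then show ?case by simp
next
  case (Suc k)
  show ?case
  proof (cases "k = 0")
    case True
    then have "degree p = 0" using Suc.prems by simp
    then have "pderiv p = 0" by (simp add: pderiv_eq_0_iff)
    then show ?thesis using True by (simp add: funpow_Suc_right del: funpow.simps)
  next
    case False
    have "degree (pderiv p) < k" using Suc.prems False by (simp add: degree_pderiv)
    then have "(pderiv ^^ k) (pderiv p) = 0" by (rule Suc.IH)
    then show ?thesis by (simp add: funpow_Suc_right del: funpow.simps)
  qed
qed

lemma higher_pderiv_pcompose_refl:
  fixes p :: "real poly"
  shows "(pderiv ^^ k) (p \<circ>\<^sub>p [:c, -1:]) = Polynomial.smult ((-1)^k) (((pderiv ^^ k) p) \<circ>\<^sub>p [:c, -1:])"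
proof (induction k)
  case 0 then show ?case by simp
next
  case (Suc k)
  have "(pderiv ^^ Suc k) (p \<circ>\<^sub>p [:c, -1:]) = pderiv (Polynomial.smult ((-1)^k) (((pderiv ^^ k) p) \<circ>\<^sub>p [:c, -1:]))"
    using Suc.IH by simp
  also have "\<dots> = Polynomial.smult ((-1)^Suc k) (((pderiv ^^ Suc k) p) \<circ>\<^sub>p [:c, -1:])"
    by (simp add: pderiv_smult pderiv_pcompose pderiv_pCons)
  finally show ?case .
qed

lemma exists_fact_big:
  fixes c :: real
  shows "\<exists>N. pi * c ^ N < fact N"
proof -
  have "(\<lambda>n. inverse (fact n) * c ^ n) \<longlonglongrightarrow> 0"
    by (rule summable_LIMSEQ_zero[OF summable_exp])
  moreover have "(0::real) < 1 / pi" by simp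
  ultimately have "eventually (\<lambda>n. inverse (fact n) * c ^ n < 1 / pi) sequentially"
    by (rule order_tendstoD)
  then obtain N where "inverse (fact N) * c ^ N < 1 / pi"
    by (auto simp: eventually_sequentially)
  then have "c ^ N < fact N / pi"
    by (simp add: field_simps)
  then have "pi * c ^ N < fact N" by (simp add: field_simps)
  then show ?thesis by blast
qed

lemma ints_coeff_mult:
  fixes p q :: "real poly"
  assumes "\<forall>k. coeff p k \<in> \<int>" "\<forall>k. coeff q k \<in> \<int>"
  shows "\<forall>k. coeff (p * q) k \<in> \<int>"
  using assms by (auto simp: coeff_mult intro!: Ints_sum Ints_mult)

lemma ints_coeff_power:
  fixes p :: "real poly"
  assumes "\<forall>k. coeff p k \<in> \<int>"
  shows "\<forall>k. coeff (p ^ n) k \<in> \<int>"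
proof (induction n)
  case 0 then show ?case by (auto simp: coeff_1)
next
  case (Suc n) then show ?case using ints_coeff_mult[OF assms] by simp
qed

theorem pi_not_rat: "pi \<notin> \<rat>"
proof
  assume "pi \<in> \<rat>"
  then obtain m n :: nat where n0: "n \<noteq> 0" and mn: "\<bar>pi\<bar> = real m / real n"
    by (rule Rats_abs_nat_div_natE)
  define a where "a = real m"
  define b where "b = real n"
  have bpos: "b > 0" using n0 by (simp add: b_def)
  have ab: "a = b * pi" using mn n0 by (simp add: a_def b_def field_simps)
  have apos: "a > 0" using ab bpos by simp
  obtain N where N: "pi * (pi * a) ^ N < fact N" using exists_fact_big by blast
  define f :: "real poly" where "f = monom 1 N * [:a, -b:] ^ N"
  define g where "g = (\<lambda>k. Polynomial.smult ((-1)^k) ((pderiv ^^ (2*k)) f))"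
  define F where "F = (\<Sum>k\<le>N. g k)"
  have degf: "degree f \<le> 2 * N"
  proof -
    have "degree ([:a, -b:] ^ N) \<le> degree [:a, -b:] * N" by (rule degree_power_le)
    also have "\<dots> \<le> N" by simp
    finally have "degree ([:a, -b:] ^ N) \<le> N" .
    moreover have "degree (monom (1::real) N) \<le> N" by (simp add: degree_monom_le)
    ultimately show ?thesis using degree_mult_le[of "monom (1::real) N" "[:a, -b:] ^ N"]
      unfolding f_def by linarith
  qed
  have gSuc: "g (Suc N) = 0"
  proof -
    have "(pderiv ^^ (2 * Suc N)) f = 0"
      by (rule higher_pderiv_zero) (use degf in simp)
    then show ?thesis unfolding g_def by simp
  qed
  have ppg: "pderiv (pderiv (g k)) = - g (Suc k)" for k
    unfolding g_def by (simp add: pderiv_smult)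
  have FF: "pderiv (pderiv F) + F = f"
  proof -
    have e2: "pderiv (pderiv q) = (pderiv ^^ 2) q" for q :: "real poly"
      by (simp add: numeral_2_eq_2)
    have "pderiv (pderiv F) = (\<Sum>k\<le>N. (pderiv ^^ 2) (g k))"
      unfolding F_def e2 by (rule higher_pderiv_sum)
    also have "\<dots> = (\<Sum>k\<le>N. - g (Suc k))"
      by (simp add: ppg flip: e2)
    finally have "pderiv (pderiv F) = (\<Sum>k\<le>N. - g (Suc k))" .
    then have "pderiv (pderiv F) + F = (\<Sum>k\<le>N. g k - g (Suc k))"
      unfolding F_def by (simp add: sum.distrib[symmetric] sum_subtractf)
    also have "\<dots> = g 0 - g (Suc N)" by (rule sum_telescope)
    also have "\<dots> = f" using gSuc by (simp add: g_def)
    finally show ?thesis .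
  qed
  define G where "G = (\<lambda>x. poly (pderiv F) x * sin x - poly F x * cos x)"
  have dG: "(G has_real_derivative poly f x * sin x) (at x)" for x
  proof -
    have "(G has_real_derivative (poly (pderiv (pderiv F)) x * sin x + poly (pderiv F) x * cos x
           - (poly (pderiv F) x * cos x + poly F x * (- sin x)))) (at x)"
      unfolding G_def
    proof (rule DERIV_diff)
      show "((\<lambda>x. poly (pderiv F) x * sin x) has_real_derivative
        poly (pderiv (pderiv F)) x * sin x + poly (pderiv F) x * cos x) (at x)"
        using DERIV_mult[OF poly_DERIV[of "pderiv F" x] DERIV_sin[of x]] by (simp add: algebra_simps)
      show "((\<lambda>x. poly F x * cos x) has_real_derivative
        poly (pderiv F) x * cos x + poly F x * - sin x) (at x)"
        using DERIV_mult[OF poly_DERIV[of "F" x] DERIV_cos[of x]] by (simp add: algebra_simps)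
    qed
    moreover have "poly (pderiv (pderiv F)) x + poly F x = poly f x"
      using FF by (metis poly_add)
    ultimately show ?thesis
      by (simp add: algebra_simps) (metis distrib_left)
  qed
  obtain z where z0: "0 < z" and zpi: "z < pi" and zG: "G pi - G 0 = (pi - 0) * (poly f z * sin z)"
    using MVT2[of 0 pi G "\<lambda>x. poly f x * sin x"] dG by auto
  have fz: "poly f z = z ^ N * (a - b * z) ^ N"
    unfolding f_def by (simp add: poly_monom mult.commute)
  have abz: "a - b * z > 0" using ab bpos zpi by (simp add: algebra_simps)
  have fzpos: "poly f z > 0" using fz z0 abz by simp
  have sinz: "sin z > 0" using z0 zpi by (simp add: sin_gt_zero)
  have fzle: "poly f z \<le> (pi * a) ^ N"
  proof -
    have "z ^ N \<le> pi ^ N" using z0 zpi by (simp add: power_mono)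
    moreover have "(a - b * z) ^ N \<le> a ^ N" using abz bpos z0 by (simp add: power_mono)
    ultimately show ?thesis using fz abz z0
      by (simp add: power_mult_distrib mult_mono)
  qed
  have sym: "f \<circ>\<^sub>p [:pi, -1:] = f"
  proof (rule poly_eq_poly_eq_iff[THEN iffD1], rule ext)
    fix x
    have "poly (f \<circ>\<^sub>p [:pi, -1:]) x = (pi - x) ^ N * (a - b * (pi - x)) ^ N"
      unfolding f_def by (simp add: poly_pcompose poly_monom mult.commute)
    also have "\<dots> = (pi - x) ^ N * (b * x) ^ N" using ab by (simp add: algebra_simps)
    also have "\<dots> = x ^ N * (a - b * x) ^ N"
    proof -
      have "a - b * x = b * (pi - x)" using ab by (simp add: algebra_simps)
      then show ?thesis by (simp add: power_mult_distrib)
    qed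
    also have "\<dots> = poly f x" unfolding f_def by (simp add: poly_monom mult.commute)
    finally show "poly (f \<circ>\<^sub>p [:pi, -1:]) x = poly f x" .
  qed
  have gpi: "poly (g k) pi = poly (g k) 0" for k
  proof -
    have e: "(pderiv ^^ (2*k)) f = ((pderiv ^^ (2*k)) f) \<circ>\<^sub>p [:pi, -1:]"
      using higher_pderiv_pcompose_refl[of "2*k" f pi] sym by simp
    have "poly ((pderiv ^^ (2*k)) f) pi = poly (((pderiv ^^ (2*k)) f) \<circ>\<^sub>p [:pi, -1:]) pi"
      using e by metis
    also have "\<dots> = poly ((pderiv ^^ (2*k)) f) 0"
      by (simp add: poly_pcompose)
    finally have "poly ((pderiv ^^ (2*k)) f) pi = poly ((pderiv ^^ (2*k)) f) 0" .
    then show ?thesis unfolding g_def by simp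
  qed
  have Fpi: "poly F pi = poly F 0" unfolding F_def by (simp add: poly_sum gpi)
  have Gdiff: "G pi - G 0 = 2 * poly F 0"
    unfolding G_def using Fpi by simp
  have coeffint: "\<forall>k. coeff f k \<in> \<int>"
  proof -
    have "\<forall>k. coeff ([:a, -b:]) k \<in> \<int>"
      by (auto simp: a_def b_def coeff_pCons split: nat.splits)
    then have "\<forall>k. coeff ([:a, -b:] ^ N) k \<in> \<int>" by (rule ints_coeff_power)
    then show ?thesis unfolding f_def by (auto simp: coeff_monom_mult)
  qed
  have termint: "poly (g k) 0 / fact N \<in> \<int>" for k
  proof -
    have "poly (g k) 0 = (-1)^k * (fact (2*k) * coeff f (2*k))"
      unfolding g_def by (simp add: poly_0_coeff_0 coeff_higher_pderiv pochhammer_fact[symmetric])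
    moreover have "fact (2*k) * coeff f (2*k) / fact N \<in> \<int>"
    proof (cases "2*k < N")
      case True
      then show ?thesis unfolding f_def by (simp add: coeff_monom_mult)
    next
      case False
      then obtain c :: nat where c: "fact (2*k) = fact N * c"
        using fact_dvd[of N "2*k"] by (auto elim!: dvdE)
      have "(fact (2*k) :: real) = fact N * real c"
        by (metis c of_nat_fact of_nat_mult)
      then have "fact (2*k) * coeff f (2*k) / fact N = real c * coeff f (2*k)" by simp
      then show ?thesis using coeffint by (simp add: Ints_mult)
    qed
    moreover have "(-1::real)^k \<in> \<int>" by (intro Ints_power Ints_minus Ints_1)
    ultimately have "(-1)^k * (fact (2*k) * coeff f (2*k) / fact N) \<in> \<int>"
      by (intro Ints_mult)
    then show ?thesis using \<open>poly (g k) 0 = _\<close> by simp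
  qed
  have "poly F 0 / fact N \<in> \<int>"
    unfolding F_def by (simp add: poly_sum sum_divide_distrib Ints_sum termint)
  then obtain w where w: "poly F 0 / fact N = of_int w" by (auto elim: Ints_cases)
  have "2 * poly F 0 > 0" using zG Gdiff fzpos sinz by simp
  moreover have wF: "poly F 0 = of_int w * fact N" using w by (simp add: field_simps)
  ultimately have "of_int w * (fact N :: real) > 0" by (simp add: mult.commute)
  then have "(of_int w :: real) > 0" by (simp add: zero_less_mult_iff)
  then have "(of_int w :: real) \<ge> 1" by simp
  then have "poly F 0 \<ge> fact N" unfolding wF by simp
  moreover have "2 * poly F 0 \<le> pi * (pi * a) ^ N"
  proof -
    have "poly f z * sin z \<le> (pi * a) ^ N * 1"
      using fzle sinz fzpos by (intro mult_mono) auto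
    then show ?thesis using zG Gdiff by simp
  qed
  ultimately show False using N fact_gt_zero[of N, where 'a=real] by linarith
qed



lemma cos_not_one:
  assumes "M > (0::nat)" "n \<noteq> (0::int)"
  shows "cos (real_of_int n / real M) \<noteq> 1"
proof
  assume "cos (real_of_int n / real M) = 1"
  then obtain k :: int where k: "real_of_int n / real M = real_of_int k * 2 * pi"
    by (auto simp: cos_one_2pi_int)
  have "k \<noteq> 0" using k assms by auto
  then have "pi = real_of_int n / (real M * 2 * real_of_int k)"
    using k assms by (simp add: field_simps)
  moreover have "real_of_int n / (real M * 2 * real_of_int k) \<in> \<rat>"
    by (intro Rats_divide Rats_mult Rats_of_int Rats_of_nat) simp
  ultimately have "pi \<in> \<rat>" by simp
  then show False using pi_not_rat by simp
qed

lemma delta_exists: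
  assumes "M > (0::nat)"
  shows "\<exists>\<delta>>0. \<forall>n::int. n \<noteq> 0 \<and> \<bar>n\<bar> \<le> int T \<longrightarrow> cos (real_of_int n * (1 / real M)) \<le> 1 - \<delta>"
proof -
  define S where "S = insert 1 ((\<lambda>n::nat. 1 - cos (real n / real M)) ` {1..T})"
  have fin: "finite S" unfolding S_def by simp
  have pos: "\<forall>s\<in>S. s > 0"
  proof
    fix s assume "s \<in> S"
    then consider "s = 1" | n where "n \<in> {1..T}" "s = 1 - cos (real n / real M)"
      unfolding S_def by auto
    then show "s > 0"
    proof cases
      case 1 then show ?thesis by simp
    next
      case 2
      have "cos (real_of_int (int n) / real M) \<noteq> 1" using cos_not_one[OF assms, of "int n"] 2 by simp
      then have "cos (real n / real M) < 1" using cos_le_one[of "real n / real M"] by (auto simp: less_le)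
      then show ?thesis using 2 by simp
    qed
  qed
  define \<delta> where "\<delta> = Min S"
  have ne: "S \<noteq> {}" unfolding S_def by simp
  have "\<delta> > 0" unfolding \<delta>_def using Min_gr_iff[OF fin ne, of 0] pos by blast
  moreover have "cos (real_of_int n * (1 / real M)) \<le> 1 - \<delta>" if "n \<noteq> 0" "\<bar>n\<bar> \<le> int T" for n :: int
  proof -
    have "nat \<bar>n\<bar> \<in> {1..T}" using that by auto
    then have "1 - cos (real (nat \<bar>n\<bar>) / real M) \<in> S" unfolding S_def by blast
    then have "\<delta> \<le> 1 - cos (real (nat \<bar>n\<bar>) / real M)" unfolding \<delta>_def using fin by simp
    moreover have "cos (real (nat \<bar>n\<bar>) / real M) = cos (real_of_int n * (1 / real M))"
    proof (cases "n \<ge> 0")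
      case True then show ?thesis by simp
    next
      case False
      then have "real (nat \<bar>n\<bar>) / real M = - (real_of_int n * (1 / real M))" by simp
      then show ?thesis by (simp only: cos_minus)
    qed
    ultimately show ?thesis by simp
  qed
  ultimately show ?thesis by blast
qed

lemma softmax_bound:
  fixes s :: "nat \<Rightarrow> real"
  assumes j0: "j0 \<in> {1..i}" and gap: "\<forall>j\<in>{1..i}. j \<noteq> j0 \<longrightarrow> s j + D \<le> s j0"
    and small: "real i * exp (- D) < eps"
  shows "SoftMax s i j0 > 1 - eps"
proof -
  define t where "t = real i * exp (- D)"
  have t0: "t \<ge> 0" unfolding t_def by simp
  have "exp (s k) \<le> (if k = j0 then exp (s j0) else 0) + exp (s j0) * exp (- D)" if "k \<in> {1..i}" for k
  proof (cases "k = j0")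
    case True then show ?thesis by simp
  next
    case False
    then have "s k \<le> s j0 + - D" using gap that by force
    then have "exp (s k) \<le> exp (s j0 + - D)" by simp
    also have "exp (s j0 + - D) = exp (s j0) * exp (- D)" by (rule exp_add)
    finally show ?thesis using False by simp
  qed
  then have "(\<Sum>k=1..i. exp (s k)) \<le> (\<Sum>k=1..i. (if k = j0 then exp (s j0) else 0) + exp (s j0) * exp (- D))"
    by (rule sum_mono)
  also have "\<dots> = exp (s j0) + real i * (exp (s j0) * exp (- D))"
    using j0 by (simp add: sum.distrib)
  also have "\<dots> = exp (s j0) * (1 + t)" unfolding t_def by (simp add: algebra_simps)
  finally have le: "(\<Sum>k=1..i. exp (s k)) \<le> exp (s j0) * (1 + t)" .
  have pos: "(\<Sum>k=1..i. exp (s k)) > 0" using j0 by (intro sum_pos) auto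
  have "1 / (1 + t) = exp (s j0) / (exp (s j0) * (1 + t))" by simp
  also have "\<dots> \<le> SoftMax s i j0"
    unfolding SoftMax_def using le pos t0 by (intro divide_left_mono) auto
  finally have "SoftMax s i j0 \<ge> 1 / (1 + t)" .
  moreover have "1 / (1 + t) > 1 - eps"
  proof -
    have "t < eps" using small t_def by simp
    moreover have "eps * t \<ge> 0" using t0 \<open>t < eps\<close> by simp
    moreover have "(1 - eps) * (1 + t) = 1 + (t - eps) - eps * t" by (simp add: algebra_simps)
    ultimately have "(1 - eps) * (1 + t) < 1" by linarith
    then show ?thesis using t0 by (simp add: field_simps)
  qed
  ultimately show ?thesis by simp
qed

definition Kmat :: "nat \<Rightarrow> nat \<Rightarrow> real mat" where
 "Kmat dTE dPE = mat (2*dPE) (3*dTE+dPE) (\<lambda>(r,c).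
    if r = 0 \<and> c = 3*dTE+dPE-2 then 1 else if r = 1 \<and> c = 3*dTE+dPE-1 then 1 else 0)"

definition Qmat :: "nat \<Rightarrow> nat \<Rightarrow> (nat \<Rightarrow> real) \<Rightarrow> real \<Rightarrow> real \<Rightarrow> real \<Rightarrow> real \<Rightarrow> real mat" where
 "Qmat dTE dPE W B g th lt = mat (2*dPE) (3*dTE+dPE) (\<lambda>(r,c).
    if r = 0 then (if c < dTE then B * cos th * W c else 0) + (if c = 3*dTE+dPE-2 then g * cos lt else 0)
       + (if c = 3*dTE+dPE-1 then g * sin lt else 0)
    else if r = 1 then (if c < dTE then B * sin th * W c else 0) + (if c = 3*dTE+dPE-2 then - g * sin lt else 0)
       + (if c = 3*dTE+dPE-1 then g * cos lt else 0)
    else 0)"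

lemma sum_if_less:
  fixes f :: "nat \<Rightarrow> real"
  assumes "k \<le> n"
  shows "(\<Sum>c\<in>{0..<n}. (if c < k then f c else 0)) = (\<Sum>c<k. f c)"
proof -
  have "(\<Sum>c\<in>{0..<n}. (if c < k then f c else 0)) = sum f {c\<in>{0..<n}. c < k}"
    by (rule sum.inter_filter[symmetric]) simp
  also have "{c\<in>{0..<n}. c < k} = {..<k}" using assms by auto
  finally show ?thesis .
qed

lemma K_apply:
  assumes "dPE \<ge> 2" "b \<in> carrier_vec (3*dTE+dPE)" "r < 2*dPE"
  shows "(Kmat dTE dPE *\<^sub>v b) $ r =
    (if r = 0 then b $ (3*dTE+dPE-2) else if r = 1 then b $ (3*dTE+dPE-1) else 0)"
proof -
  have "(Kmat dTE dPE *\<^sub>v b) $ r = (\<Sum>c\<in>{0..<3*dTE+dPE}.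
     (if r = 0 \<and> c = 3*dTE+dPE-2 then 1 else if r = 1 \<and> c = 3*dTE+dPE-1 then 1 else 0) * b $ c)"
    using assms by (simp add: Kmat_def scalar_prod_def)
  also have "\<dots> = (\<Sum>c\<in>{0..<3*dTE+dPE}.
     (if r = 0 \<and> c = 3*dTE+dPE-2 then b $ c else 0) + (if r = 1 \<and> c = 3*dTE+dPE-1 then b $ c else 0))"
    by (rule sum.cong) auto
  also have "\<dots> = (if r = 0 then b $ (3*dTE+dPE-2) else 0) + (if r = 1 then b $ (3*dTE+dPE-1) else 0)"
    using assms(1) by (simp add: sum.distrib sum.delta)
  finally show ?thesis by simp
qed

lemma Q_apply:
  assumes "dPE \<ge> 2" "a \<in> carrier_vec (3*dTE+dPE)"
  shows "(Qmat dTE dPE W B g th lt *\<^sub>v a) $ 0 = B * cos th * (\<Sum>c<dTE. W c * a $ c)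
      + g * cos lt * a $ (3*dTE+dPE-2) + g * sin lt * a $ (3*dTE+dPE-1)"
    and "(Qmat dTE dPE W B g th lt *\<^sub>v a) $ 1 = B * sin th * (\<Sum>c<dTE. W c * a $ c)
      - g * sin lt * a $ (3*dTE+dPE-2) + g * cos lt * a $ (3*dTE+dPE-1)"
proof -
  have le: "dTE \<le> 3*dTE+dPE" by simp
  have "(Qmat dTE dPE W B g th lt *\<^sub>v a) $ 0 = (\<Sum>c\<in>{0..<3*dTE+dPE}.
     ((if c < dTE then B * cos th * W c else 0) + (if c = 3*dTE+dPE-2 then g * cos lt else 0)
       + (if c = 3*dTE+dPE-1 then g * sin lt else 0)) * a $ c)"
    using assms by (simp add: Qmat_def scalar_prod_def)
  also have "\<dots> = (\<Sum>c\<in>{0..<3*dTE+dPE}. (if c < dTE then B * cos th * (W c * a $ c) else 0))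
     + (\<Sum>c\<in>{0..<3*dTE+dPE}. (if c = 3*dTE+dPE-2 then g * cos lt * a $ c else 0))
     + (\<Sum>c\<in>{0..<3*dTE+dPE}. (if c = 3*dTE+dPE-1 then g * sin lt * a $ c else 0))"
    unfolding sum.distrib[symmetric] by (rule sum.cong) (auto simp: algebra_simps)
  also have "\<dots> = B * cos th * (\<Sum>c<dTE. W c * a $ c)
      + g * cos lt * a $ (3*dTE+dPE-2) + g * sin lt * a $ (3*dTE+dPE-1)"
    using assms(1) by (simp add: sum_if_less[OF le] sum.delta sum_distrib_left)
  finally show "(Qmat dTE dPE W B g th lt *\<^sub>v a) $ 0 = B * cos th * (\<Sum>c<dTE. W c * a $ c)
      + g * cos lt * a $ (3*dTE+dPE-2) + g * sin lt * a $ (3*dTE+dPE-1)" .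
  have "(Qmat dTE dPE W B g th lt *\<^sub>v a) $ 1 = (\<Sum>c\<in>{0..<3*dTE+dPE}.
     ((if c < dTE then B * sin th * W c else 0) + (if c = 3*dTE+dPE-2 then - g * sin lt else 0)
       + (if c = 3*dTE+dPE-1 then g * cos lt else 0)) * a $ c)"
    using assms by (simp add: Qmat_def scalar_prod_def)
  also have "\<dots> = (\<Sum>c\<in>{0..<3*dTE+dPE}. (if c < dTE then B * sin th * (W c * a $ c) else 0))
     + (\<Sum>c\<in>{0..<3*dTE+dPE}. (if c = 3*dTE+dPE-2 then - g * sin lt * a $ c else 0))
     + (\<Sum>c\<in>{0..<3*dTE+dPE}. (if c = 3*dTE+dPE-1 then g * cos lt * a $ c else 0))"
    unfolding sum.distrib[symmetric] by (rule sum.cong) (auto simp: algebra_simps)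
  also have "\<dots> = B * sin th * (\<Sum>c<dTE. W c * a $ c)
      - g * sin lt * a $ (3*dTE+dPE-2) + g * cos lt * a $ (3*dTE+dPE-1)"
    using assms(1) by (simp add: sum_if_less[OF le] sum.delta sum_distrib_left)
  finally show "(Qmat dTE dPE W B g th lt *\<^sub>v a) $ 1 = B * sin th * (\<Sum>c<dTE. W c * a $ c)
      - g * sin lt * a $ (3*dTE+dPE-2) + g * cos lt * a $ (3*dTE+dPE-1)" .
qed

lemma QK_score:
  assumes "dPE \<ge> 2" "a \<in> carrier_vec (3*dTE+dPE)" "b \<in> carrier_vec (3*dTE+dPE)"
  shows "(Qmat dTE dPE W B g th lt *\<^sub>v a) \<bullet> (Kmat dTE dPE *\<^sub>v b) =
     (Qmat dTE dPE W B g th lt *\<^sub>v a) $ 0 * b $ (3*dTE+dPE-2)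
     + (Qmat dTE dPE W B g th lt *\<^sub>v a) $ 1 * b $ (3*dTE+dPE-1)"
proof -
  let ?q = "Qmat dTE dPE W B g th lt *\<^sub>v a"
  have "?q \<bullet> (Kmat dTE dPE *\<^sub>v b) = (\<Sum>r\<in>{0..<2*dPE}. ?q $ r * (Kmat dTE dPE *\<^sub>v b) $ r)"
    by (simp add: scalar_prod_def Kmat_def)
  also have "\<dots> = (\<Sum>r\<in>{0..<2*dPE}. (if r = 0 then ?q $ 0 * b $ (3*dTE+dPE-2) else 0)
      + (if r = 1 then ?q $ 1 * b $ (3*dTE+dPE-1) else 0))"
    by (rule sum.cong) (auto simp: K_apply[OF assms(1,3)])
  also have "\<dots> = ?q $ 0 * b $ (3*dTE+dPE-2) + ?q $ 1 * b $ (3*dTE+dPE-1)"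
    using assms(1) by (simp add: sum.distrib sum.delta)
  finally show ?thesis .
qed


lemma pos_enc_facts:
  assumes "even dPE" "dPE > 0" "M > 0"
  shows "pos_enc dTE dPE M i \<in> carrier_vec (3*dTE+dPE)"
    and "c < 3*dTE \<Longrightarrow> pos_enc dTE dPE M i $ c = 0"
    and "pos_enc dTE dPE M i $ (3*dTE+dPE-2) = cos (real i * (1 / real M))"
    and "pos_enc dTE dPE M i $ (3*dTE+dPE-1) = sin (real i * (1 / real M))"
proof -
  show "pos_enc dTE dPE M i \<in> carrier_vec (3*dTE+dPE)" unfolding pos_enc_def by (rule vec_carrier)
  show "c < 3*dTE \<Longrightarrow> pos_enc dTE dPE M i $ c = 0" by (simp add: pos_enc_def)
  obtain k where k: "dPE = 2 * k" "k > 0" using assms(1,2) by (auto elim: evenE)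
  have e1: "- (2 * real k) / real dPE = - 1" using k by simp
  have w: "real M powr (- (2 * real k) / real dPE) = 1 / real M"
    unfolding e1 powr_minus by (simp add: divide_inverse)
  have "(3*dTE+dPE-2) - 3*dTE = 2 * (k - 1)" "(2 * (k - 1)) div 2 + 1 = k"
    using k by auto
  then show "pos_enc dTE dPE M i $ (3*dTE+dPE-2) = cos (real i * (1 / real M))"
    using k w by (simp add: pos_enc_def Let_def)
  have "(3*dTE+dPE-1) - 3*dTE = 2 * (k - 1) + 1" "(2 * (k - 1) + 1) div 2 + 1 = k"
    using k by auto
  then show "pos_enc dTE dPE M i $ (3*dTE+dPE-1) = sin (real i * (1 / real M))"
    using k w by (simp add: pos_enc_def Let_def)
qed

lemma token_facts:
  fixes u :: "nat \<Rightarrow> real vec" and lam :: "nat \<Rightarrow> real"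
  assumes car: "\<forall>v\<in>{1..V}. u v \<in> carrier_vec (3*dTE+dPE)"
    and zer: "\<forall>v\<in>{1..V}. \<forall>c. dTE \<le> c \<and> c < 3*dTE+dPE \<longrightarrow> u v $ c = 0"
    and ort: "\<forall>v\<in>{1..V}. \<forall>w\<in>{1..V}. (\<Sum>c<dTE. u v $ c * u w $ c) = (if v = w then 1 else 0)"
    and h: "h = vec (3*dTE+dPE) (\<lambda>c. \<Sum>v=1..V. lam v * u v $ c)"
  shows "h \<in> carrier_vec (3*dTE+dPE)"
    and "dTE \<le> c \<Longrightarrow> c < 3*dTE+dPE \<Longrightarrow> h $ c = 0"
    and "S \<subseteq> {1..V} \<Longrightarrow> (\<Sum>c<dTE. (\<Sum>v\<in>S. u v $ c) * h $ c) = (\<Sum>v\<in>S. lam v)"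
    and "x \<in> {1..V} \<Longrightarrow> h \<bullet> u x = lam x"
proof -
  show "h \<in> carrier_vec (3*dTE+dPE)" using h by simp
  show "dTE \<le> c \<Longrightarrow> c < 3*dTE+dPE \<Longrightarrow> h $ c = 0" using h zer by simp
  have key: "(\<Sum>c<dTE. u v $ c * h $ c) = lam v" if v: "v \<in> {1..V}" for v
  proof -
    have "(\<Sum>c<dTE. u v $ c * h $ c) = (\<Sum>c<dTE. \<Sum>w=1..V. lam w * (u v $ c * u w $ c))"
      using h by (intro sum.cong) (auto simp: sum_distrib_left algebra_simps)
    also have "\<dots> = (\<Sum>w=1..V. lam w * (\<Sum>c<dTE. u v $ c * u w $ c))"
      by (subst sum.swap) (simp add: sum_distrib_left)
    also have "\<dots> = (\<Sum>w=1..V. if v = w then lam w else 0)"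
      using ort v by (intro sum.cong) auto
    also have "\<dots> = lam v" using v by (simp add: sum.delta)
    finally show ?thesis .
  qed
  show "S \<subseteq> {1..V} \<Longrightarrow> (\<Sum>c<dTE. (\<Sum>v\<in>S. u v $ c) * h $ c) = (\<Sum>v\<in>S. lam v)"
  proof -
    assume S: "S \<subseteq> {1..V}"
    have "(\<Sum>c<dTE. (\<Sum>v\<in>S. u v $ c) * h $ c) = (\<Sum>v\<in>S. \<Sum>c<dTE. u v $ c * h $ c)"
      by (subst sum.swap) (simp add: sum_distrib_right)
    also have "\<dots> = (\<Sum>v\<in>S. lam v)" using S key by (intro sum.cong) auto
    finally show ?thesis .
  qed
  show "x \<in> {1..V} \<Longrightarrow> h \<bullet> u x = lam x"
  proof -
    assume x: "x \<in> {1..V}"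
    have ux: "u x \<in> carrier_vec (3*dTE+dPE)" using car x by auto
    have "h \<bullet> u x = (\<Sum>c\<in>{0..<3*dTE+dPE}. h $ c * u x $ c)" using ux by (simp add: scalar_prod_def)
    also have "\<dots> = (\<Sum>c\<in>{0..<3*dTE+dPE}. if c < dTE then u x $ c * h $ c else 0)"
      using zer x by (intro sum.cong) auto
    also have "\<dots> = (\<Sum>c<dTE. u x $ c * h $ c)" by (rule sum_if_less) simp
    also have "\<dots> = lam x" using key x by simp
    finally show ?thesis .
  qed
qed


theorem lemma3:
  fixes V dTE dPE M :: nat and u :: "nat \<Rightarrow> real vec"
    and x l T :: nat and eps :: real
  assumes "even dPE" and "dPE > 0" and "M > 0"
    and "\<forall>v\<in>{1..V}. u v \<in> carrier_vec (3*dTE+dPE)"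
    and "\<forall>v\<in>{1..V}. \<forall>c. dTE \<le> c \<and> c < 3*dTE+dPE \<longrightarrow> u v $ c = 0"
    and "\<forall>v\<in>{1..V}. \<forall>w\<in>{1..V}. (\<Sum>c<dTE. u v $ c * u w $ c) = (if v = w then 1 else 0)"
    and "x \<in> {1..V}" and "T \<ge> 1" and "0 < eps" and "eps < 1"
  shows "\<exists>K Q. K \<in> carrier_mat (2*dPE) (3*dTE+dPE) \<and> Q \<in> carrier_mat (2*dPE) (3*dTE+dPE) \<and>
    (\<forall>h :: nat \<Rightarrow> real vec.
       (\<forall>i\<in>{1..T}. \<exists>lam :: nat \<Rightarrow> real. (\<forall>v\<in>{1..V}. lam v \<ge> 0) \<and> (\<Sum>v=1..V. (lam v)^2) = 1
            \<and> h i = vec (3*dTE+dPE) (\<lambda>c. \<Sum>v=1..V. lam v * u v $ c))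
       \<and> (\<forall>i\<in>{1..T}. u x \<bullet> h i \<in> {0, 1})
       \<and> (\<forall>i\<in>{1..T}. i \<le> l \<longrightarrow> u x \<bullet> h i = 0)
       \<longrightarrow> (\<forall>i\<in>{1..T}.
             (let p = pos_enc dTE dPE M;
                  s = (\<lambda>j. (Q *\<^sub>v (h i + p i)) \<bullet> (K *\<^sub>v (h j + p j)))
              in if h i \<bullet> u x = 1 then SoftMax s i (i - l) > 1 - eps
                 else SoftMax s i 1 > 1 - eps)))"
proof -
  note as = assms
  have dPE2: "dPE \<ge> 2" using assms(1,2) by (auto elim: evenE)
  define \<theta> where "\<theta> = 1 / real M"
  obtain \<delta> where \<delta>0: "\<delta> > 0"
    and \<delta>: "\<forall>n::int. n \<noteq> 0 \<and> \<bar>n\<bar> \<le> int T \<longrightarrow> cos (real_of_int n * \<theta>) \<le> 1 - \<delta>"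
    using delta_exists[OF assms(3), of T] unfolding \<theta>_def by blast
  define L where "L = ln (real T / eps) + 1"
  define g where "g = L / \<delta>"
  define B where "B = (L + 2 * g) / \<delta>"
  define S where "S = {1..V} - {x}"
  define W where "W = (\<lambda>c. \<Sum>v\<in>S. u v $ c)"
  define K where "K = Kmat dTE dPE"
  define Q where "Q = Qmat dTE dPE W B g \<theta> (real l * \<theta>)"
  have Tpos: "real T > 0" using assms(8) by simp
  have "real T / eps \<ge> 1" using assms(8,9,10) by (simp add: field_simps)
  then have lnpos: "ln (real T / eps) \<ge> 0" by simp
  then have L0: "L > 0" unfolding L_def by simp
  have g0: "g > 0" unfolding g_def using L0 \<delta>0 by simp
  have B0: "B \<ge> 0" unfolding B_def using L0 g0 \<delta>0 by simp
  have Bd: "B * \<delta> = L + 2 * g" unfolding B_def using \<delta>0 by simp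
  have gd: "g * \<delta> = L" unfolding g_def using \<delta>0 by simp
  have small: "real i * exp (- L) < eps" if "i \<le> T" for i :: nat
  proof -
    have "exp (- L) = exp (- ln (real T / eps)) * exp (- 1)" unfolding L_def
      by (simp add: exp_add[symmetric])
    also have "exp (- ln (real T / eps)) = eps / real T"
      using Tpos assms(9) by (simp add: exp_minus exp_ln)
    finally have e: "exp (- L) = eps / real T * exp (- 1)" .
    have "real i * exp (- L) \<le> real T * exp (- L)" using that by (intro mult_right_mono) auto
    also have "\<dots> = eps * exp (- 1)" using e Tpos by simp
    also have "\<dots> < eps * 1" using assms(9) by (intro mult_strict_left_mono) auto
    finally show ?thesis by simp
  qed
  show ?thesis
  proof (intro exI conjI allI impI ballI)
    show "K \<in> carrier_mat (2*dPE) (3*dTE+dPE)" by (simp add: K_def Kmat_def)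
    show "Q \<in> carrier_mat (2*dPE) (3*dTE+dPE)" by (simp add: Q_def Qmat_def)
    fix h :: "nat \<Rightarrow> real vec" and i :: nat
    assume H: "(\<forall>i\<in>{1..T}. \<exists>lam :: nat \<Rightarrow> real. (\<forall>v\<in>{1..V}. lam v \<ge> 0) \<and> (\<Sum>v=1..V. (lam v)^2) = 1
            \<and> h i = vec (3*dTE+dPE) (\<lambda>c. \<Sum>v=1..V. lam v * u v $ c))
       \<and> (\<forall>i\<in>{1..T}. u x \<bullet> h i \<in> {0, 1})
       \<and> (\<forall>i\<in>{1..T}. i \<le> l \<longrightarrow> u x \<bullet> h i = 0)"
    assume i: "i \<in> {1..T}"
    obtain Lam where Lam: "\<forall>i\<in>{1..T}. (\<forall>v\<in>{1..V}. Lam i v \<ge> 0) \<and> (\<Sum>v=1..V. (Lam i v)^2) = 1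
            \<and> h i = vec (3*dTE+dPE) (\<lambda>c. \<Sum>v=1..V. Lam i v * u v $ c)"
      using H bchoice[of "{1..T}" "\<lambda>i lam. (\<forall>v\<in>{1..V}. lam v \<ge> 0) \<and> (\<Sum>v=1..V. (lam v)^2) = 1
            \<and> h i = vec (3*dTE+dPE) (\<lambda>c. \<Sum>v=1..V. lam v * u v $ c)"] by blast
    define p where "p = pos_enc dTE dPE M"
    note tf = token_facts[OF assms(4,5,6)]
    have hcar: "h j \<in> carrier_vec (3*dTE+dPE)" if "j \<in> {1..T}" for j
      using tf(1) Lam that by blast
    have hz: "h j $ c = 0" if "j \<in> {1..T}" "dTE \<le> c" "c < 3*dTE+dPE" for j c
      using tf(2) Lam that by blast
    have pcar: "p j \<in> carrier_vec (3*dTE+dPE)" for j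
      unfolding p_def by (rule pos_enc_facts(1)[OF assms(1,2,3)])
    have pdim: "dim_vec (p j) = 3*dTE+dPE" for j using pcar[of j] by auto
    have addv: "(h j + p j) $ c = h j $ c + p j $ c" if "c < 3*dTE+dPE" for j c
      using that pdim[of j] by simp
    have pz: "p j $ c = 0" if "c < dTE" for j c
      unfolding p_def using that by (intro pos_enc_facts(2)[OF assms(1,2,3)]) simp
    have pC: "p j $ (3*dTE+dPE-2) = cos (real j * \<theta>)" for j
      unfolding p_def \<theta>_def by (rule pos_enc_facts(3)[OF assms(1,2,3)])
    have pS: "p j $ (3*dTE+dPE-1) = sin (real j * \<theta>)" for j
      unfolding p_def \<theta>_def by (rule pos_enc_facts(4)[OF assms(1,2,3)])
    define \<psi> where "\<psi> = (\<Sum>v\<in>S. Lam i v)"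
    have hi: "h i = vec (3*dTE+dPE) (\<lambda>c. \<Sum>v=1..V. Lam i v * u v $ c)" using Lam i by blast
    have psi: "(\<Sum>c<dTE. W c * (h i + p i) $ c) = \<psi>"
    proof -
      have "(\<Sum>c<dTE. W c * (h i + p i) $ c) = (\<Sum>c<dTE. (\<Sum>v\<in>S. u v $ c) * h i $ c)"
      proof (rule sum.cong)
        fix c assume "c \<in> {..<dTE}"
        then have "c < dim_vec (p i)" "c < dTE" using pcar[of i] by auto
        then show "W c * (h i + p i) $ c = (\<Sum>v\<in>S. u v $ c) * h i $ c"
          unfolding W_def using pz by simp
      qed simp
      also have "\<dots> = \<psi>" unfolding \<psi>_def
        by (rule tf(3)[OF hi]) (auto simp: S_def)
      finally show ?thesis .
    qed
    have score: "(Q *\<^sub>v (h i + p i)) \<bullet> (K *\<^sub>v (h j + p j)) =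
        B * \<psi> * cos (real j * \<theta> - \<theta>) + g * cos (real i * \<theta> - real l * \<theta> - real j * \<theta>)"
      if j: "j \<in> {1..i}" for j
    proof -
      have jT: "j \<in> {1..T}" using j i by auto
      have acar: "h i + p i \<in> carrier_vec (3*dTE+dPE)" using hcar[OF i] pcar by simp
      have bcar: "h j + p j \<in> carrier_vec (3*dTE+dPE)" using hcar[OF jT] pcar by simp
      have lt1: "3*dTE+dPE-2 < 3*dTE+dPE" "3*dTE+dPE-1 < 3*dTE+dPE" "dTE \<le> 3*dTE+dPE-2"
        "dTE \<le> 3*dTE+dPE-1" using dPE2 by auto
      have aC: "(h i + p i) $ (3*dTE+dPE-2) = cos (real i * \<theta>)"
        using addv hz[OF i] lt1 pC by simp
      have aS: "(h i + p i) $ (3*dTE+dPE-1) = sin (real i * \<theta>)"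
        using addv hz[OF i] lt1 pS by simp
      have bC: "(h j + p j) $ (3*dTE+dPE-2) = cos (real j * \<theta>)"
        using addv hz[OF jT] lt1 pC by simp
      have bS: "(h j + p j) $ (3*dTE+dPE-1) = sin (real j * \<theta>)"
        using addv hz[OF jT] lt1 pS by simp
      have "(Q *\<^sub>v (h i + p i)) \<bullet> (K *\<^sub>v (h j + p j)) =
        (B * cos \<theta> * \<psi> + g * cos (real l * \<theta>) * cos (real i * \<theta>) + g * sin (real l * \<theta>) * sin (real i * \<theta>))
          * cos (real j * \<theta>)
        + (B * sin \<theta> * \<psi> - g * sin (real l * \<theta>) * cos (real i * \<theta>) + g * cos (real l * \<theta>) * sin (real i * \<theta>))
          * sin (real j * \<theta>)"
        unfolding Q_def K_def QK_score[OF dPE2 acar bcar] Q_apply[OF dPE2 acar] psi aC aS bC bS ..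
      also have "\<dots> = B * \<psi> * cos (real j * \<theta> - \<theta>) + g * cos (real i * \<theta> - real l * \<theta> - real j * \<theta>)"
        by (simp only: cos_diff sin_diff) (simp add: algebra_simps)
      finally show ?thesis .
    qed
    have lamx: "u x \<bullet> h i = Lam i x"
    proof -
      have ux: "u x \<in> carrier_vec (3*dTE+dPE)" using assms(4,7) by blast
      have "u x \<bullet> h i = h i \<bullet> u x" using comm_scalar_prod[OF ux hcar[OF i]] .
      also have "\<dots> = Lam i x" by (rule tf(4)[OF hi assms(7)])
      finally show ?thesis .
    qed
    have hux: "h i \<bullet> u x = Lam i x"
      using tf(4)[OF hi assms(7)] .
    have "u x \<bullet> h i \<in> {0, 1}" using H i by blast
    then have lam01: "Lam i x \<in> {0, 1}" using lamx by simp
    have sumsq: "(Lam i x)^2 + (\<Sum>v\<in>S. (Lam i v)^2) = 1"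
    proof -
      have "(\<Sum>v=1..V. (Lam i v)^2) = (Lam i x)^2 + (\<Sum>v\<in>S. (Lam i v)^2)"
        unfolding S_def using assms(7) by (simp add: sum.remove)
      then show ?thesis using Lam i by simp
    qed
    have Lnn: "\<forall>v\<in>S. Lam i v \<ge> 0" using Lam i by (auto simp: S_def)
    define s where "s = (\<lambda>j. (Q *\<^sub>v (h i + p i)) \<bullet> (K *\<^sub>v (h j + p j)))"
    have goal: "if h i \<bullet> u x = 1 then SoftMax s i (i - l) > 1 - eps else SoftMax s i 1 > 1 - eps"
    proof (cases "Lam i x = 1")
      case True
      have "(\<Sum>v\<in>S. (Lam i v)^2) = 0" using sumsq True by simp
      then have "\<forall>v\<in>S. (Lam i v)^2 = 0" by (subst (asm) sum_nonneg_eq_0_iff) (auto simp: S_def)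
      then have psi0: "\<psi> = 0" unfolding \<psi>_def by simp
      have il: "l < i"
      proof (rule ccontr)
        assume "\<not> l < i"
        then have "u x \<bullet> h i = 0" using H i by auto
        then show False using lamx True by simp
      qed
      have j0: "i - l \<in> {1..i}" using il by auto
      have "SoftMax s i (i - l) > 1 - eps"
      proof (rule softmax_bound[OF j0 _ small])
        show "\<forall>j\<in>{1..i}. j \<noteq> i - l \<longrightarrow> s j + L \<le> s (i - l)"
        proof (intro ballI impI)
          fix j assume j: "j \<in> {1..i}" and jne: "j \<noteq> i - l"
          define n where "n = int i - int l - int j"
          have n0: "n \<noteq> 0" using jne il unfolding n_def by auto
          have nT: "\<bar>n\<bar> \<le> int T" using j i il unfolding n_def by auto
          have "s j = g * cos (real_of_int n * \<theta>)"
            unfolding s_def score[OF j] psi0 n_def by (simp add: algebra_simps)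
          also have "\<dots> \<le> g * (1 - \<delta>)" using \<delta> n0 nT g0 by (intro mult_left_mono) auto
          finally have "s j \<le> g - L" using gd by (simp add: algebra_simps)
          moreover have "s (i - l) = g"
            unfolding s_def score[OF j0] psi0 using il by (simp add: of_nat_diff algebra_simps)
          ultimately show "s j + L \<le> s (i - l)" by simp
        qed
        show "i \<le> T" using i by simp
      qed
      then show ?thesis using hux True by simp
    next
      case False
      then have x0: "Lam i x = 0" using lam01 by simp
      have "(\<Sum>v\<in>S. (Lam i v)^2) = 1" using sumsq x0 by simp
      moreover have "(Lam i v)^2 \<le> Lam i v" if v: "v \<in> S" for v
      proof -
        have "(Lam i v)^2 \<le> (\<Sum>v\<in>S. (Lam i v)^2)"
          using v by (intro member_le_sum) (auto simp: S_def)
        then have "(Lam i v)^2 \<le> 1" using sumsq x0 by simp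
        then have "(Lam i v)^2 \<le> 1^2" by simp
        then have "Lam i v \<le> 1" by (rule power2_le_imp_le) simp
        then show ?thesis using Lnn v by (simp add: power2_eq_square mult_left_le_one_le)
      qed
      ultimately have psi1: "\<psi> \<ge> 1" unfolding \<psi>_def
        by (metis sum_mono)
      have j0: "(1::nat) \<in> {1..i}" using i by simp
      have Bpsi: "B * \<psi> \<ge> 0" using B0 psi1 by simp
      have s1: "s 1 \<ge> B * \<psi> - g"
      proof -
        have "s 1 = B * \<psi> + g * cos (real i * \<theta> - real l * \<theta> - \<theta>)"
          unfolding s_def score[OF j0] by simp
        moreover have "g * cos (real i * \<theta> - real l * \<theta> - \<theta>) \<ge> g * (-1)"
          using g0 by (intro mult_left_mono) auto
        ultimately show ?thesis by simp
      qed
      have BB: "B * \<delta> * 1 \<le> B * \<delta> * \<psi>" using psi1 B0 \<delta>0 by (intro mult_left_mono) auto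
      have "SoftMax s i 1 > 1 - eps"
      proof (rule softmax_bound[OF j0 _ small])
        show "\<forall>j\<in>{1..i}. j \<noteq> 1 \<longrightarrow> s j + L \<le> s 1"
        proof (intro ballI impI)
          fix j assume j: "j \<in> {1..i}" and jne: "j \<noteq> 1"
          have c1: "cos (real j * \<theta> - \<theta>) \<le> 1 - \<delta>"
          proof -
            have "int j - 1 \<noteq> 0 \<and> \<bar>int j - 1\<bar> \<le> int T" using j jne i by auto
            then have "cos (real_of_int (int j - 1) * \<theta>) \<le> 1 - \<delta>" using \<delta> by blast
            then show ?thesis by (simp add: algebra_simps)
          qed
          have t1: "B * \<psi> * cos (real j * \<theta> - \<theta>) \<le> B * \<psi> * (1 - \<delta>)"
            using c1 Bpsi by (rule mult_left_mono)
          have t2: "g * cos (real i * \<theta> - real l * \<theta> - real j * \<theta>) \<le> g * 1"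
            using g0 by (intro mult_left_mono) auto
          have "s j \<le> B * \<psi> * (1 - \<delta>) + g"
            unfolding s_def score[OF j] using t1 t2 by linarith
          moreover have "B * \<psi> * (1 - \<delta>) = B * \<psi> - B * \<delta> * \<psi>" by (simp add: algebra_simps)
          ultimately show "s j + L \<le> s 1" using Bd BB s1 by linarith
        qed
        show "i \<le> T" using i by simp
      qed
      then show ?thesis using hux x0 by simp
    qed
    show "let p = pos_enc dTE dPE M;
                  s = (\<lambda>j. (Q *\<^sub>v (h i + p i)) \<bullet> (K *\<^sub>v (h j + p j)))
              in if h i \<bullet> u x = 1 then SoftMax s i (i - l) > 1 - eps
                 else SoftMax s i 1 > 1 - eps"
      using goal unfolding Let_def s_def p_def .
  qed
qed

end
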